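(* Let $n\ge 6$, let $D\subseteq[n]\setminus\{1,2,3,4\}$ with $|D|\ge2$, and let $H_2$ be the $3$-graph on $[n]$ with edge set $\big(E(B(2,n-2))\setminus\{2ij:i,j\in D\}\big)\cup\{34i: i\in D\}$. Then $\lambda(H_2)\le\frac{\sqrt3}{18}$.
   Context: $B(2,n-2)$ is the $3$-graph on $[n]$ whose edge set is $\{e\in\binom{[n]}3: e\cap\{1,2\}\neq\emptyset\}$. For a $3$-graph $G$ on $[n]$, $\lambda(G)=\max\{\sum_{e\in E(G)}\prod_{i\in e}x_i:\sum_i x_i=1,x_i\ge0\}$. *)

theory Defs
  imports Complex_Main
begin

definition B2 :: "nat \<Rightarrow> nat set set" where
  "B2 n = {e. e \<subseteq> {1..n} \<and> card e = 3 \<and> e \<inter> {1,2} \<noteq> {}}"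

definition lagrangian_poly :: "nat set set \<Rightarrow> (nat \<Rightarrow> real) \<Rightarrow> real" where
  "lagrangian_poly G x = (\<Sum>e\<in>G. \<Prod>i\<in>e. x i)"

definition lagrangian :: "nat \<Rightarrow> nat set set \<Rightarrow> real" where
  "lagrangian n G = Sup {lagrangian_poly G x | x.
       (\<forall>i\<in>{1..n}. 0 \<le> x i) \<and> (\<Sum>i\<in>{1..n}. x i) = 1}"

definition H2 :: "nat \<Rightarrow> nat set \<Rightarrow> nat set set" where
  "H2 n D = (B2 n - {{2, i, j} | i j. i \<in> D \<and> j \<in> D}) \<union> {{3, 4, i} | i. i \<in> D}"

end

theory Submission
  imports Defs
begin


definition P2 :: "nat set \<Rightarrow> nat set set" where
  "P2 A = {{i,j} | i j. i \<in> A \<and> j \<in> A \<and> i \<noteq> j}"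

definition e2 :: "(nat \<Rightarrow> real) \<Rightarrow> nat set \<Rightarrow> real" where
  "e2 x A = (\<Sum>e\<in>P2 A. \<Prod>i\<in>e. x i)"

lemma P2_sub: "P2 A \<subseteq> Pow A"
  unfolding P2_def by auto

lemma finite_P2: "finite A \<Longrightarrow> finite (P2 A)"
  using P2_sub finite_Pow_iff finite_subset by metis

lemma P2_empty: "P2 {} = {}"
  unfolding P2_def by auto

lemma P2_insert: "a \<notin> A \<Longrightarrow> P2 (insert a A) = P2 A \<union> (\<lambda>j. {a,j}) ` A"
  unfolding P2_def by auto

lemma e2_empty: "e2 x {} = 0"
  unfolding e2_def P2_empty by simp

lemma e2_insert:
  assumes "finite A" "a \<notin> A"
  shows "e2 x (insert a A) = e2 x A + x a * sum x A"
proof -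
  have disj: "P2 A \<inter> (\<lambda>j. {a,j}) ` A = {}"
    using assms(2) P2_sub by auto
  have inj: "inj_on (\<lambda>j. {a,j}) A"
    using assms(2) by (auto simp: inj_on_def doubleton_eq_iff)
  have "(\<Sum>e\<in>(\<lambda>j. {a,j}) ` A. \<Prod>i\<in>e. x i) = (\<Sum>j\<in>A. \<Prod>i\<in>{a,j}. x i)"
    by (simp add: sum.reindex[OF inj])
  also have "\<dots> = (\<Sum>j\<in>A. x a * x j)"
  proof (rule sum.cong)
    fix j assume "j \<in> A"
    then have "a \<noteq> j" using assms(2) by auto
    then show "(\<Prod>i\<in>{a,j}. x i) = x a * x j" by simp
  qed simp
  also have "\<dots> = x a * sum x A" by (simp add: sum_distrib_left)
  finally have *: "(\<Sum>e\<in>(\<lambda>j. {a,j}) ` A. \<Prod>i\<in>e. x i) = x a * sum x A" .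
  show ?thesis
    unfolding e2_def P2_insert[OF assms(2)]
    by (subst sum.union_disjoint) (use assms disj finite_P2 * in auto)
qed

lemma e2_union:
  assumes "finite A" "finite B" "A \<inter> B = {}"
  shows "e2 x (A \<union> B) = e2 x A + e2 x B + sum x A * sum x B"
  using assms(2,3)
proof (induction B rule: finite_induct)
  case empty
  then show ?case by (simp add: e2_empty)
next
  case (insert b B)
  have "A \<union> insert b B = insert b (A \<union> B)" by auto
  then have "e2 x (A \<union> insert b B) = e2 x (A \<union> B) + x b * sum x (A \<union> B)"
    using insert assms(1) by (simp add: e2_insert)
  also have "\<dots> = e2 x A + e2 x B + sum x A * sum x B + x b * (sum x A + sum x B)"
    using insert assms(1) by (simp add: sum.union_disjoint)
  finally show ?case using insert by (simp add: e2_insert algebra_simps)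
qed

lemma e2_nonneg: "(\<And>i. i \<in> A \<Longrightarrow> 0 \<le> x i) \<Longrightarrow> 0 \<le> e2 x A"
  unfolding e2_def using P2_sub
  by (intro sum_nonneg prod_nonneg) blast

lemma e2_bound:
  assumes "finite A" "\<And>i. i \<in> A \<Longrightarrow> 0 \<le> x i"
  shows "2 * e2 x A \<le> (sum x A)^2"
  using assms
proof (induction A rule: finite_induct)
  case empty
  then show ?case by (simp add: e2_empty)
next
  case (insert a A)
  then have "2 * e2 x A \<le> (sum x A)^2" by auto
  moreover have "0 \<le> x a * x a" by simp
  moreover have "sum x (insert a A) = x a + sum x A" using insert by simp
  then have "(sum x (insert a A))^2 = x a * x a + 2 * (x a * sum x A) + (sum x A)^2"
    by (simp add: power2_eq_square algebra_simps)
  moreover have "e2 x (insert a A) = e2 x A + x a * sum x A" using insert by (simp add: e2_insert)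
  ultimately show ?case by linarith
qed

lemma e2_pair: "p \<noteq> q \<Longrightarrow> e2 x {p,q} = x p * x q"
proof -
  assume "p \<noteq> q"
  have "e2 x {q} = 0" using e2_insert[of "{}" q x] by (simp add: e2_empty)
  then show ?thesis using e2_insert[of "{q}" p x] \<open>p \<noteq> q\<close> by simp
qed

lemma sum_pq:
  fixes x :: "nat \<Rightarrow> real"
  assumes "finite A" "p \<notin> A" "q \<notin> A" "p \<noteq> q"
  shows "(\<Sum>e\<in>(\<lambda>k. {p,q,k}) ` A. \<Prod>i\<in>e. x i) = x p * x q * sum x A"
proof -
  have inj: "inj_on (\<lambda>k. {p,q,k}) A"
  proof (rule inj_onI)
    fix k k' assume k: "k \<in> A" "k' \<in> A" and eq: "{p,q,k} = {p,q,k'}"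
    have "k \<in> {p,q,k'}" using eq by blast
    moreover have "k \<noteq> p" "k \<noteq> q" using k assms by auto
    ultimately show "k = k'" by blast
  qed
  have "(\<Sum>e\<in>(\<lambda>k. {p,q,k}) ` A. \<Prod>i\<in>e. x i) = (\<Sum>k\<in>A. \<Prod>i\<in>{p,q,k}. x i)"
    by (simp add: sum.reindex[OF inj])
  also have "\<dots> = (\<Sum>k\<in>A. x p * x q * x k)"
  proof (rule sum.cong)
    fix k assume "k \<in> A"
    then have "k \<noteq> p" "k \<noteq> q" using assms by auto
    then show "(\<Prod>i\<in>{p,q,k}. x i) = x p * x q * x k" using assms(4) by (simp add: mult.assoc)
  qed simp
  also have "\<dots> = x p * x q * sum x A" by (simp add: sum_distrib_left)
  finally show ?thesis .
qed

lemma sum_ins: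
  fixes x :: "nat \<Rightarrow> real"
  assumes "finite F" "\<And>e. e \<in> F \<Longrightarrow> finite e \<and> p \<notin> e"
  shows "(\<Sum>e\<in>insert p ` F. \<Prod>i\<in>e. x i) = x p * (\<Sum>e\<in>F. \<Prod>i\<in>e. x i)"
proof -
  have inj: "inj_on (insert p) F"
  proof (rule inj_onI)
    fix e e' assume "e \<in> F" "e' \<in> F" and eq: "insert p e = insert p e'"
    then have "p \<notin> e" "p \<notin> e'" using assms(2) by auto
    then show "e = e'" using eq by (metis Diff_insert_absorb)
  qed
  have "(\<Sum>e\<in>insert p ` F. \<Prod>i\<in>e. x i) = (\<Sum>e\<in>F. \<Prod>i\<in>insert p e. x i)"
    by (simp add: sum.reindex[OF inj])
  also have "\<dots> = (\<Sum>e\<in>F. x p * (\<Prod>i\<in>e. x i))"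
    by (rule sum.cong) (use assms(2) in auto)
  also have "\<dots> = x p * (\<Sum>e\<in>F. \<Prod>i\<in>e. x i)" by (simp add: sum_distrib_left)
  finally show ?thesis .
qed

lemma P2_mono: "A \<subseteq> B \<Longrightarrow> P2 A \<subseteq> P2 B"
  unfolding P2_def by blast

lemma H2_decomp:
  assumes n4: "n \<ge> 4" and Dsub: "D \<subseteq> {1..n} - {1,2,3,4}"
  shows "H2 n D = (\<lambda>k. {1,2,k}) ` ({1..n} - {1,2}) \<union> insert 1 ` P2 ({1..n} - {1,2})
      \<union> insert 2 ` (P2 ({1..n} - {1,2}) - P2 D) \<union> (\<lambda>k. {3,4,k}) ` D" (is "_ = ?A \<union> ?B \<union> ?C \<union> ?E")
proof
  let ?R = "{1..n} - {1,2::nat}"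
  let ?Rem = "{{2, i, j} | i j. i \<in> D \<and> j \<in> D}"
  show "H2 n D \<subseteq> ?A \<union> ?B \<union> ?C \<union> ?E"
  proof
    fix e assume "e \<in> H2 n D"
    then consider "e \<in> B2 n" "e \<notin> ?Rem" | "e \<in> ?E" unfolding H2_def by blast
    then show "e \<in> ?A \<union> ?B \<union> ?C \<union> ?E"
    proof cases
      case 2 then show ?thesis by blast
    next
      case 1
      then have eV: "e \<subseteq> {1..n}" and c3: "card e = 3" and m: "1 \<in> e \<or> 2 \<in> e" and nr: "e \<notin> ?Rem"
        unfolding B2_def by auto
      have fe: "finite e" using eV finite_subset by blast
      consider "1 \<in> e" "2 \<in> e" | "1 \<in> e" "2 \<notin> e" | "2 \<in> e" "1 \<notin> e" using m by blast
      then show ?thesis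
      proof cases
        case 1
        then have "card (e - {1,2}) = 1" using c3 fe by (subst card_Diff_subset) auto
        then obtain k where k: "e - {1,2} = {k}" using card_1_singleton_iff by (metis One_nat_def)
        then have "e = {1,2,k}" using 1 by blast
        moreover have "k \<in> ?R" using k eV by blast
        ultimately show ?thesis by blast
      next
        case 2
        then have "card (e - {1}) = 2" using c3 fe by (simp add: card_Diff_singleton)
        then obtain i j where ij: "e - {1} = {i,j}" "i \<noteq> j" using card_2_iff by metis
        then have "e = insert 1 {i,j}" using 2 by blast
        moreover have "{i,j} \<in> P2 ?R" unfolding P2_def using ij eV 2 by blast
        ultimately show ?thesis by blast
      next
        case 3
        then have "card (e - {2}) = 2" using c3 fe by (simp add: card_Diff_singleton)
        then obtain i j where ij: "e - {2} = {i,j}" "i \<noteq> j" using card_2_iff by metis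
        then have ee: "e = {2,i,j}" using 3 by blast
        have "{i,j} \<in> P2 ?R" unfolding P2_def using ij eV 3 by blast
        moreover have "{i,j} \<notin> P2 D"
        proof
          assume "{i,j} \<in> P2 D"
          then obtain i' j' where "{i,j} = {i',j'}" "i' \<in> D" "j' \<in> D" unfolding P2_def by blast
          then have "i \<in> D" "j \<in> D" by (auto simp: doubleton_eq_iff)
          then have "e \<in> ?Rem" using ee by blast
          then show False using nr by blast
        qed
        ultimately show ?thesis using ee by blast
      qed
    qed
  qed
  show "?A \<union> ?B \<union> ?C \<union> ?E \<subseteq> H2 n D"
  proof
    fix e assume "e \<in> ?A \<union> ?B \<union> ?C \<union> ?E"
    then consider "e \<in> ?A" | "e \<in> ?B" | "e \<in> ?C" | "e \<in> ?E" by blast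
    then show "e \<in> H2 n D"
    proof cases
      case 1
      then obtain k where k: "k \<in> ?R" "e = {1,2,k}" by blast
      have "e \<in> B2 n" unfolding B2_def using k n4 by auto
      moreover have "e \<notin> ?Rem"
      proof
        assume "e \<in> ?Rem"
        then obtain i j where "e = {2,i,j}" "i \<in> D" "j \<in> D" by blast
        then have "1 \<in> D" using k by auto
        then show False using Dsub by auto
      qed
      ultimately show ?thesis unfolding H2_def by blast
    next
      case 2
      then obtain f where f: "f \<in> P2 ?R" "e = insert 1 f" by blast
      then obtain i j where ij: "f = {i,j}" "i \<in> ?R" "j \<in> ?R" "i \<noteq> j" unfolding P2_def by blast
      have "e \<in> B2 n" unfolding B2_def using f ij n4 by auto
      moreover have "e \<notin> ?Rem"
      proof
        assume "e \<in> ?Rem"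
        then obtain i j where "e = {2,i,j}" "i \<in> D" "j \<in> D" by blast
        then have "1 \<in> D" using f by auto
        then show False using Dsub by auto
      qed
      ultimately show ?thesis unfolding H2_def by blast
    next
      case 3
      then obtain f where f: "f \<in> P2 ?R" "f \<notin> P2 D" "e = insert 2 f" by blast
      then obtain i j where ij: "f = {i,j}" "i \<in> ?R" "j \<in> ?R" "i \<noteq> j" unfolding P2_def by blast
      have "e \<in> B2 n" unfolding B2_def using f ij n4 by auto
      moreover have "e \<notin> ?Rem"
      proof
        assume "e \<in> ?Rem"
        then obtain i' j' where e': "e = {2,i',j'}" "i' \<in> D" "j' \<in> D" by blast
        have "i \<in> {2,i',j'}" "j \<in> {2,i',j'}" using e' f ij by auto
        then have "i \<in> D" "j \<in> D" using ij e' by auto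
        then have "f \<in> P2 D" unfolding P2_def using ij by blast
        then show False using f by blast
      qed
      ultimately show ?thesis unfolding H2_def by blast
    next
      case 4 then show ?thesis unfolding H2_def by blast
    qed
  qed
qed

lemma poly_H2:
  fixes x :: "nat \<Rightarrow> real"
  assumes n4: "n \<ge> 4" and Dsub: "D \<subseteq> {1..n} - {1,2,3,4}"
  shows "lagrangian_poly (H2 n D) x = x 1 * x 2 * sum x ({1..n} - {1,2}) + x 1 * e2 x ({1..n} - {1,2})
     + x 2 * (e2 x ({1..n} - {1,2}) - e2 x D) + x 3 * x 4 * sum x D"
proof -
  let ?R = "{1..n} - {1,2::nat}"
  let ?A = "(\<lambda>k. {1,2,k}) ` ?R" and ?B = "insert 1 ` P2 ?R"
    and ?C = "insert 2 ` (P2 ?R - P2 D)" and ?E = "(\<lambda>k. {3,4::nat,k}) ` D"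
  have fR: "finite ?R" by simp
  have fD: "finite D" using Dsub finite_subset by blast
  have DR: "D \<subseteq> ?R" using Dsub by blast
  have fP: "finite (P2 ?R)" "finite (P2 D)" using fR fD finite_P2 by auto
  have fin: "finite ?A" "finite ?B" "finite ?C" "finite ?E" using fR fD fP by auto
  have pA: "\<And>e. e \<in> ?A \<Longrightarrow> 1 \<in> e \<and> 2 \<in> e" by auto
  have pB: "\<And>e. e \<in> ?B \<Longrightarrow> 1 \<in> e \<and> 2 \<notin> e"
  proof -
    fix e assume "e \<in> ?B"
    then obtain f where f: "f \<in> P2 ?R" "e = insert 1 f" by blast
    then have "f \<subseteq> ?R" using P2_sub by blast
    then show "1 \<in> e \<and> 2 \<notin> e" using f by auto
  qed
  have pC: "\<And>e. e \<in> ?C \<Longrightarrow> 2 \<in> e \<and> 1 \<notin> e"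
  proof -
    fix e assume "e \<in> ?C"
    then obtain f where f: "f \<in> P2 ?R" "e = insert 2 f" by blast
    then have "f \<subseteq> ?R" using P2_sub by blast
    then show "2 \<in> e \<and> 1 \<notin> e" using f by auto
  qed
  have pE: "\<And>e. e \<in> ?E \<Longrightarrow> 1 \<notin> e \<and> 2 \<notin> e" using Dsub by auto
  have sA: "(\<Sum>e\<in>?A. \<Prod>i\<in>e. x i) = x 1 * x 2 * sum x ?R"
    by (rule sum_pq) auto
  have sE: "(\<Sum>e\<in>?E. \<Prod>i\<in>e. x i) = x 3 * x 4 * sum x D"
    by (rule sum_pq) (use fD Dsub in auto)
  have elt: "\<And>e. e \<in> P2 ?R \<Longrightarrow> finite e \<and> 1 \<notin> e \<and> 2 \<notin> e"
    using P2_sub[of "{1..n} - {1,2}"] fR finite_subset by blast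
  have sB: "(\<Sum>e\<in>?B. \<Prod>i\<in>e. x i) = x 1 * e2 x ?R"
    unfolding e2_def by (rule sum_ins) (use fP elt in auto)
  have "(\<Sum>e\<in>?C. \<Prod>i\<in>e. x i) = x 2 * (\<Sum>e\<in>P2 ?R - P2 D. \<Prod>i\<in>e. x i)"
    by (rule sum_ins) (use fP elt in auto)
  also have "(\<Sum>e\<in>P2 ?R - P2 D. \<Prod>i\<in>e. x i) = e2 x ?R - e2 x D"
    unfolding e2_def by (rule sum_diff) (use fP P2_mono[OF DR] in auto)
  finally have sC: "(\<Sum>e\<in>?C. \<Prod>i\<in>e. x i) = x 2 * (e2 x ?R - e2 x D)" .
  have d1: "(?A \<union> ?B \<union> ?C) \<inter> ?E = {}"
  proof (rule disjoint_iff[THEN iffD2], intro allI impI)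
    fix e assume "e \<in> ?A \<union> ?B \<union> ?C"
    then have "e \<in> ?A \<or> e \<in> ?B \<or> e \<in> ?C" by (simp only: Un_iff disj_assoc)
    then have "1 \<in> e \<or> 2 \<in> e" using pA[of e] pB[of e] pC[of e] by meson
    then show "e \<notin> ?E" using pE[of e] by meson
  qed
  have d2: "(?A \<union> ?B) \<inter> ?C = {}"
  proof (rule disjoint_iff[THEN iffD2], intro allI impI)
    fix e assume "e \<in> ?A \<union> ?B"
    then have "e \<in> ?A \<or> e \<in> ?B" by (simp only: Un_iff disj_assoc)
    then have "1 \<in> e" using pA[of e] pB[of e] by meson
    then show "e \<notin> ?C" using pC[of e] by meson
  qed
  have d3: "?A \<inter> ?B = {}"
  proof (rule disjoint_iff[THEN iffD2], intro allI impI)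
    fix e assume "e \<in> ?A"
    then have "2 \<in> e" using pA[of e] by meson
    then show "e \<notin> ?B" using pB[of e] by meson
  qed
  have f3: "finite (?A \<union> ?B \<union> ?C)" "finite (?A \<union> ?B)" by (simp_all only: finite_Un fin)
  have "lagrangian_poly (H2 n D) x = (\<Sum>e\<in>?A \<union> ?B \<union> ?C \<union> ?E. \<Prod>i\<in>e. x i)"
    unfolding lagrangian_poly_def H2_decomp[OF n4 Dsub] ..
  also have "\<dots> = (\<Sum>e\<in>?A \<union> ?B \<union> ?C. \<Prod>i\<in>e. x i) + (\<Sum>e\<in>?E. \<Prod>i\<in>e. x i)"
    by (rule sum.union_disjoint) (rule f3, rule fin, rule d1)
  also have "(\<Sum>e\<in>?A \<union> ?B \<union> ?C. \<Prod>i\<in>e. x i) = (\<Sum>e\<in>?A \<union> ?B. \<Prod>i\<in>e. x i) + (\<Sum>e\<in>?C. \<Prod>i\<in>e. x i)"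
    by (rule sum.union_disjoint) (rule f3, rule fin, rule d2)
  also have "(\<Sum>e\<in>?A \<union> ?B. \<Prod>i\<in>e. x i) = (\<Sum>e\<in>?A. \<Prod>i\<in>e. x i) + (\<Sum>e\<in>?B. \<Prod>i\<in>e. x i)"
    by (rule sum.union_disjoint) (rule fin, rule fin, rule d3)
  finally show ?thesis using sA sB sC sE by simp
qed



lemma phi_bound:
  fixes t :: real assumes "0 \<le> t" "t \<le> 1/2"
  shows "t*(1-2*t)*(1-t) \<le> sqrt 3 / 18"
proof -
  define s where "s = sqrt 3"
  have s2: "s * s = 3" unfolding s_def by simp
  have s0: "0 \<le> s" unfolding s_def by simp
  have "(6*t-3+s)^2 * (3+2*s-6*t) = 6*s - 108*(t*(1-2*t)*(1-t)) + (s*s - 3)*(2*s - 9 + 18*t)"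
    by (simp add: algebra_simps power2_eq_square)
  then have id: "6*s - 108*(t*(1-2*t)*(1-t)) = (6*t-3+s)^2 * (3+2*s-6*t)"
    using s2 by simp
  have "0 \<le> (6*t-3+s)^2 * (3+2*s-6*t)"
    using s0 assms by (intro mult_nonneg_nonneg) auto
  then show ?thesis using id unfolding s_def by linarith
qed

lemma cube_bound:
  fixes u v k :: real assumes "0 \<le> u" "0 \<le> v" "u + v \<le> k"
  shows "u^2 * v \<le> 4*k^3/27"
proof -
  have "u^2 * v \<le> u^2 * (k - u)" using assms by (intro mult_left_mono) auto
  moreover have "4*k^3 - 27*(u^2*(k-u)) = (3*u - 2*k)^2 * (3*u + k)"
    by (simp add: algebra_simps power2_eq_square power3_eq_cube)
  moreover have "0 \<le> (3*u - 2*k)^2 * (3*u + k)" using assms by (intro mult_nonneg_nonneg) auto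
  ultimately show ?thesis by linarith
qed

lemma poly1:
  fixes m :: real assumes "0 \<le> m" "m \<le> 1/2"
  shows "(m*(1-m) - m^2/2)^2 \<le> 4*(1-m)*(962/10000 - m*(1-m)^2/2 - (1-2*m)^3/27)"
proof -
  have mm: "m^2 \<le> 1/4"
  proof -
    have "m*m \<le> (1/2)*(1/2)" using assms by (intro mult_mono) auto
    then show ?thesis by (simp add: power2_eq_square)
  qed
  have m3: "m^3 \<le> m^2/2"
  proof -
    have "m^2 * m \<le> m^2 * (1/2)" using assms by (intro mult_left_mono) auto
    then show ?thesis by (simp add: power3_eq_cube power2_eq_square mult.assoc)
  qed
  have m4: "m^4 \<le> m^2/4"
  proof -
    have "m^2 * m^2 \<le> m^2 * (1/4)" using mm by (intro mult_left_mono) auto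
    then show ?thesis by (simp add: power4_eq_xxxx power2_eq_square mult.assoc)
  qed
  have qid: "7987/33750 - 45487/33750*m + (845/432)*m^2 = 845/432*(m - 13996/40625)^2 + 52597/11718750"
    by (simp add: algebra_simps power2_eq_square)
  have q: "0 < 7987/33750 - 45487/33750*m + (845/432)*m^2"
    unfolding qid by (simp add: add_nonneg_pos)
  have "4*(1-m)*(962/10000 - m*(1-m)^2/2 - (1-2*m)^3/27) - (m*(1-m) - m^2/2)^2
     = 7987/33750 - 45487/33750*m + 7/3*m^2 - 1/27*m^3 - 155/108*m^4"
    by (simp add: field_simps power2_eq_square power3_eq_cube power4_eq_xxxx)
  then show ?thesis using m3 m4 q by linarith
qed

lemma F_bound:
  fixes a b u y z :: real
  assumes a0: "0 \<le> a" and b0: "0 \<le> b" and u0: "0 \<le> u" and y0: "0 \<le> y" and z0: "0 \<le> z"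
    and s1: "a + b + u + y + z = 1"
  shows "a*b*(u+y+z) + (a+b)*(u^2/4 + u*z + z^2/2 + (u+z)*y) + a*y^2/2 + u^2*y/4 \<le> sqrt 3 / 18"
proof -
  define m where "m = a + b"
  define S where "S = u + y + z"
  have S1: "S = 1 - m" using s1 unfolding m_def S_def by linarith
  have m0: "0 \<le> m" and m1: "m \<le> 1" using a0 b0 S1 u0 y0 z0 unfolding m_def S_def by linarith+
  have Fid: "a*b*(u+y+z) + (a+b)*(u^2/4 + u*z + z^2/2 + (u+z)*y) + a*y^2/2 + u^2*y/4
      = a*b*S + m*S^2/2 - b*y^2/2 + u^2*(y-m)/4"
    unfolding m_def S_def by (simp add: field_simps power2_eq_square)
  have S0: "0 \<le> S" using S1 m1 by linarith
  show ?thesis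
  proof (cases "y \<le> m")
    case True
    have "u^2*(y-m) \<le> 0" using True by (intro mult_nonneg_nonpos) auto
    moreover have "0 \<le> b*y^2" using b0 by simp
    moreover have "a*b \<le> m^2/4"
    proof -
      have "0 \<le> (a-b)^2" by simp
      then show ?thesis unfolding m_def by (simp add: power2_eq_square algebra_simps)
    qed
    then have "a*b*S \<le> m^2/4*S" using S0 by (intro mult_right_mono) auto
    ultimately have "a*b*S + m*S^2/2 - b*y^2/2 + u^2*(y-m)/4 \<le> m^2/4*S + m*S^2/2" by linarith
    also have "\<dots> = (m/2)*(1-2*(m/2))*(1-(m/2))"
      unfolding S1 by (simp add: field_simps power2_eq_square)
    also have "\<dots> \<le> sqrt 3 / 18" using m0 m1 by (intro phi_bound) auto
    finally show ?thesis using Fid by linarith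
  next
    case False
    then have ym: "m < y" by simp
    have mh: "m \<le> 1/2" using ym S1 u0 z0 unfolding S_def by linarith
    have "m^2 \<le> y^2" using ym m0 by (intro power_mono) auto
    then have by2: "b*m^2 \<le> b*y^2" using b0 by (intro mult_left_mono) auto
    have cb: "u^2*(y-m) \<le> 4*(1-2*m)^3/27"
      by (rule cube_bound) (use u0 ym S1 z0 in \<open>auto simp: S_def\<close>)
    define K where "K = m*S - m^2/2"
    define g where "g = a*b*S - b*m^2/2"
    have aeq: "a = m - b" unfolding m_def by simp
    have gid: "K^2 - 4*S*g = (K - 2*S*b)^2"
      unfolding K_def g_def aeq by (simp add: field_simps power2_eq_square)
    have "4*S*g \<le> K^2" using gid by (metis diff_ge_0_iff_ge zero_le_power2)
    also have "K^2 \<le> 4*(1-m)*(962/10000 - m*(1-m)^2/2 - (1-2*m)^3/27)"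
      unfolding K_def S1 by (rule poly1) (use m0 mh in auto)
    finally have "4*S*g \<le> 4*S*(962/10000 - m*S^2/2 - (1-2*m)^3/27)" unfolding S1 .
    moreover have "0 < S" using S1 mh by linarith
    ultimately have gb: "g \<le> 962/10000 - m*S^2/2 - (1-2*m)^3/27" by simp
    have c0: "962/10000 \<le> sqrt 3 / 18"
    proof -
      have "(17316/10000::real) \<le> sqrt 3" by (rule real_le_rsqrt) (simp add: power2_eq_square)
      then show ?thesis by simp
    qed
    have "a*b*S + m*S^2/2 - b*y^2/2 + u^2*(y-m)/4 \<le> g + m*S^2/2 + (1-2*m)^3/27"
      unfolding g_def using by2 cb by linarith
    then show ?thesis using Fid gb c0 by linarith
  qed
qed


lemma point_bound:
  fixes n :: nat and D :: "nat set" and x :: "nat \<Rightarrow> real"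
  assumes n4: "n \<ge> 4" and Dsub: "D \<subseteq> {1..n} - {1,2,3,4}"
    and x0: "\<forall>i\<in>{1..n}. 0 \<le> x i" and xs: "(\<Sum>i\<in>{1..n}. x i) = 1"
  shows "lagrangian_poly (H2 n D) x \<le> sqrt 3 / 18"
proof -
  define R where "R = {1..n} - {1,2::nat}"
  define Zs where "Zs = {1..n} - {1,2,3,4::nat} - D"
  define T where "T = insert 3 (insert (4::nat) Zs)"
  define a where "a = x 1"
  define b where "b = x 2"
  define c where "c = x 3"
  define d where "d = x 4"
  define Y where "Y = sum x D"
  define Z where "Z = sum x Zs"
  define Q where "Q = e2 x D"
  define Ez where "Ez = e2 x Zs"
  have fD: "finite D" using Dsub finite_subset by blast
  have fZ: "finite Zs" unfolding Zs_def by simp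
  have fT: "finite T" unfolding T_def using fZ by simp
  have fR: "finite R" unfolding R_def by simp
  have V: "{1..n} = insert 1 (insert 2 R)" unfolding R_def using n4 by auto
  have RTD: "R = T \<union> D" unfolding R_def T_def Zs_def using Dsub n4 by auto
  have TD: "T \<inter> D = {}" unfolding T_def Zs_def using Dsub by auto
  have 34: "3 \<notin> insert 4 Zs" "4 \<notin> Zs" unfolding Zs_def by auto
  have xn: "\<And>i. i \<in> {1..n} \<Longrightarrow> 0 \<le> x i" using x0 by blast
  have a0: "0 \<le> a" "0 \<le> b" "0 \<le> c" "0 \<le> d" unfolding a_def b_def c_def d_def using xn n4 by auto
  have Y0: "0 \<le> Y" unfolding Y_def using Dsub xn by (intro sum_nonneg) auto
  have Z0: "0 \<le> Z" unfolding Z_def Zs_def using xn by (intro sum_nonneg) auto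
  have Q0: "0 \<le> Q" "2*Q \<le> Y^2" unfolding Q_def Y_def
    using Dsub xn fD by (auto intro!: e2_nonneg e2_bound)
  have Ez0: "0 \<le> Ez" "2*Ez \<le> Z^2" unfolding Ez_def Z_def Zs_def
    using xn by (auto intro!: e2_nonneg e2_bound)
  have sumT: "sum x T = c + d + Z" unfolding T_def c_def d_def Z_def using 34 fZ by simp
  have sumR: "sum x R = c + d + Z + Y"
    unfolding RTD Y_def using sum.union_disjoint[OF fT fD TD, of x] sumT by simp
  have "(\<Sum>i\<in>{1..n}. x i) = a + b + sum x R"
    unfolding V a_def b_def using fR by (simp add: R_def)
  then have tot: "a + b + c + d + Y + Z = 1" using xs sumR by simp
  have e2T: "e2 x T = Ez + d*Z + c*(d + Z)"
    unfolding T_def Ez_def c_def d_def Z_def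
    using 34 fZ by (simp add: e2_insert)
  have e2R: "e2 x R = Ez + d*Z + c*(d + Z) + Q + (c + d + Z)*Y"
    unfolding RTD using e2_union[OF fT fD TD, of x] e2T sumT by (simp add: Q_def Y_def)
  have "lagrangian_poly (H2 n D) x = a*b*(c+d+Z+Y) + a*(Ez + d*Z + c*(d + Z) + Q + (c + d + Z)*Y)
      + b*(Ez + d*Z + c*(d + Z) + (c + d + Z)*Y) + c*d*Y"
    using poly_H2[OF n4 Dsub, of x] sumR e2R
    unfolding R_def a_def b_def c_def d_def Y_def Q_def by simp
  also have "\<dots> \<le> a*b*((c+d)+Y+Z) + (a+b)*((c+d)^2/4 + (c+d)*Z + Z^2/2 + ((c+d)+Z)*Y) + a*Y^2/2 + (c+d)^2*Y/4"
    (is "?L \<le> ?R")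
  proof -
    have cd: "0 \<le> (c+d)^2/4 - c*d"
    proof -
      have "0 \<le> (c-d)^2" by simp
      then show ?thesis by (simp add: power2_eq_square algebra_simps)
    qed
    have id: "?R - ?L = (a+b)*((c+d)^2/4 - c*d) + (a+b)*(Z^2/2 - Ez) + a*(Y^2/2 - Q) + Y*((c+d)^2/4 - c*d)"
      by (simp add: field_simps power2_eq_square)
    have "0 \<le> (a+b)*((c+d)^2/4 - c*d)" using cd a0 by (intro mult_nonneg_nonneg) auto
    moreover have "0 \<le> (a+b)*(Z^2/2 - Ez)" using Ez0 a0 by (intro mult_nonneg_nonneg) auto
    moreover have "0 \<le> a*(Y^2/2 - Q)" using Q0 a0 by (intro mult_nonneg_nonneg) auto
    moreover have "0 \<le> Y*((c+d)^2/4 - c*d)" using cd Y0 by (intro mult_nonneg_nonneg) auto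
    ultimately show ?thesis using id by linarith
  qed
  also have "\<dots> \<le> sqrt 3 / 18"
    by (rule F_bound) (use a0 Y0 Z0 tot in auto)
  finally show ?thesis .
qed

theorem lemma4p11:
  fixes n :: nat and D :: "nat set"
  assumes "n \<ge> 6"
    and "D \<subseteq> {1..n} - {1,2,3,4}"
    and "card D \<ge> 2"
  shows "lagrangian n (H2 n D) \<le> sqrt 3 / 18"
proof -
  let ?X = "{lagrangian_poly (H2 n D) x | x. (\<forall>i\<in>{1..n}. 0 \<le> x i) \<and> (\<Sum>i\<in>{1..n}. x i) = 1}"
  have ne: "?X \<noteq> {}"
  proof -
    let ?x = "\<lambda>i::nat. if i = 1 then (1::real) else 0"
    have "(\<Sum>i\<in>{1..n}. ?x i) = 1" using assms(1) by (simp add: sum.delta)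
    then have "lagrangian_poly (H2 n D) ?x \<in> ?X" by auto
    then show ?thesis by blast
  qed
  have "\<forall>v\<in>?X. v \<le> sqrt 3 / 18"
    using point_bound[of n D] assms(1,2) by auto
  then show ?thesis unfolding lagrangian_def using ne by (intro cSup_least) auto
qed

end
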